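(* Let $\mathcal{G}=(V,L)$ be a finite connected undirected graph with monitor set $M$ and non-monitor set $N=V\setminus M$, with measurement paths given by Controllable Simple-path Probing (CSP). Let $S\subseteq N$ and $k\ge1$. (a) If for every node set $V'\subseteq V$ with $|V'|\le k+1$ containing at most one monitor, each connected component of $\mathcal{G}-V'$ that contains a node of $S$ also contains a monitor, then $S$ is $k$-identifiable. (b) If $S$ is $k$-identifiable, then for every node set $V'\subseteq V$ with $|V'|\le k$ containing at most one monitor, each connected component of $\mathcal{G}-V'$ that contains a node of $S$ also contains a monitor.
   Context: $\mathcal{G}-V'$ denotes deletion of the nodes of $V'$ and incident links. Under CSP, the measurement paths $P$ are all simple paths (no repeated nodes) in $\mathcal{G}$ between two distinct monitors. A failure set is any $F\subseteq N$; a path fails iff it traverses a node of $F$. $P_F$ is the set of paths in $P$ traversing a node of $F$; $F_1,F_2$ distinguishable iff $P_{F_1}\ne P_{F_2}$. $S\subseteq N$ is $k$-identifiable if any two failure sets $F_1,F_2$ with $|F_1|,|F_2|\le k$ and $F_1\cap S\ne F_2\cap S$ are distinguishable. *)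

theory Defs
  imports Main
begin

definition undirected_graph :: "'a set \<Rightarrow> 'a set set \<Rightarrow> bool" where
  "undirected_graph V L \<longleftrightarrow> finite V \<and> (\<forall>e\<in>L. e \<subseteq> V \<and> card e = 2)"

definition walk_in :: "'a set \<Rightarrow> 'a set set \<Rightarrow> 'a list \<Rightarrow> bool" where
  "walk_in X L p \<longleftrightarrow> p \<noteq> [] \<and> set p \<subseteq> X \<and>
     (\<forall>i. Suc i < length p \<longrightarrow> {p ! i, p ! Suc i} \<in> L)"

definition connected_in :: "'a set \<Rightarrow> 'a set set \<Rightarrow> 'a \<Rightarrow> 'a \<Rightarrow> bool" where
  "connected_in X L u v \<longleftrightarrow> (\<exists>p. walk_in X L p \<and> hd p = u \<and> last p = v)"

definition connected_graph :: "'a set \<Rightarrow> 'a set set \<Rightarrow> bool" where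
  "connected_graph V L \<longleftrightarrow> (\<forall>u\<in>V. \<forall>v\<in>V. connected_in V L u v)"

text \<open>Connected components of the subgraph induced by X (for X = V - V' this is G - V').\<close>
definition components :: "'a set \<Rightarrow> 'a set set \<Rightarrow> 'a set set" where
  "components X L = {{v. connected_in X L u v} | u. u \<in> X}"

definition csp_paths :: "'a set \<Rightarrow> 'a set set \<Rightarrow> 'a set \<Rightarrow> 'a list set" where
  "csp_paths V L M = {p. walk_in V L p \<and> distinct p \<and> hd p \<in> M \<and> last p \<in> M \<and> hd p \<noteq> last p}"

definition failed_paths :: "'a list set \<Rightarrow> 'a set \<Rightarrow> 'a list set" where
  "failed_paths P F = {p \<in> P. set p \<inter> F \<noteq> {}}"

definition k_identifiable :: "'a set \<Rightarrow> 'a set set \<Rightarrow> 'a set \<Rightarrow> 'a set \<Rightarrow> nat \<Rightarrow> bool" where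
  "k_identifiable V L M S k \<longleftrightarrow>
     (\<forall>F1 F2. F1 \<subseteq> V - M \<longrightarrow> F2 \<subseteq> V - M \<longrightarrow> card F1 \<le> k \<longrightarrow> card F2 \<le> k \<longrightarrow>
        F1 \<inter> S \<noteq> F2 \<inter> S \<longrightarrow>
        failed_paths (csp_paths V L M) F1 \<noteq> failed_paths (csp_paths V L M) F2)"

definition cut_condition :: "'a set \<Rightarrow> 'a set set \<Rightarrow> 'a set \<Rightarrow> 'a set \<Rightarrow> nat \<Rightarrow> bool" where
  "cut_condition V L M S c \<longleftrightarrow>
     (\<forall>V'. V' \<subseteq> V \<longrightarrow> card V' \<le> c \<longrightarrow> card (V' \<inter> M) \<le> 1 \<longrightarrow>
        (\<forall>C\<in>components (V - V') L. C \<inter> S \<noteq> {} \<longrightarrow> C \<inter> M \<noteq> {}))"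

end

theory Submission
  imports Defs
begin

lemma walk_Nil[simp]: "\<not> walk_in X L []" by (simp add: walk_in_def)
lemma walk_single[simp]: "walk_in X L [x] \<longleftrightarrow> x \<in> X" by (simp add: walk_in_def)
lemma walk_Cons_Cons[simp]:
  "walk_in X L (x#y#ys) \<longleftrightarrow> x \<in> X \<and> {x,y} \<in> L \<and> walk_in X L (y#ys)"
proof
  assume h: "walk_in X L (x#y#ys)"
  have a: "\<And>i. Suc i < Suc (Suc (length ys)) \<Longrightarrow> {(x#y#ys) ! i, (x#y#ys) ! Suc i} \<in> L"
    using h by (auto simp: walk_in_def)
  have "\<forall>i. Suc i < length (y#ys) \<longrightarrow> {(y#ys) ! i, (y#ys) ! Suc i} \<in> L"
  proof (intro allI impI)
    fix i assume "Suc i < length (y#ys)"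
    then show "{(y#ys) ! i, (y#ys) ! Suc i} \<in> L" using a[of "Suc i"] by simp
  qed
  then show "x \<in> X \<and> {x,y} \<in> L \<and> walk_in X L (y#ys)" using h a[of 0] by (auto simp: walk_in_def)
next
  assume h: "x \<in> X \<and> {x,y} \<in> L \<and> walk_in X L (y#ys)"
  have "\<forall>i. Suc i < length (x#y#ys) \<longrightarrow> {(x#y#ys) ! i, (x#y#ys) ! Suc i} \<in> L"
  proof (intro allI impI)
    fix i assume i: "Suc i < length (x#y#ys)"
    show "{(x#y#ys) ! i, (x#y#ys) ! Suc i} \<in> L"
    proof (cases i)
      case 0 then show ?thesis using h by simp
    next
      case (Suc j) then show ?thesis using h i by (auto simp: walk_in_def)
    qed
  qed
  then show "walk_in X L (x#y#ys)" using h by (auto simp: walk_in_def)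
qed

lemma walk_append:
  "xs \<noteq> [] \<Longrightarrow> ys \<noteq> [] \<Longrightarrow>
   walk_in X L (xs @ ys) \<longleftrightarrow> walk_in X L xs \<and> walk_in X L ys \<and> {last xs, hd ys} \<in> L"
proof (induction xs rule: list_nonempty_induct)
  case (single x) then show ?case by (cases ys) auto
next
  case (cons x xs) then show ?case by (cases xs) auto
qed

lemma walk_rev: "walk_in X L (rev p) \<longleftrightarrow> walk_in X L p"
proof (induction p)
  case Nil then show ?case by simp
next
  case (Cons x p)
  show ?case
  proof (cases "p = []")
    case True then show ?thesis by simp
  next
    case False
    then have "walk_in X L (rev p @ [x]) \<longleftrightarrow> walk_in X L (rev p) \<and> x \<in> X \<and> {last (rev p), x} \<in> L"
      by (subst walk_append) auto
    moreover have "walk_in X L (x # p) \<longleftrightarrow> x \<in> X \<and> {x, hd p} \<in> L \<and> walk_in X L p"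
      using False by (cases p) auto
    ultimately show ?thesis using Cons False by (auto simp: last_rev insert_commute)
  qed
qed

lemma walk_set: "walk_in X L p \<Longrightarrow> set p \<subseteq> X" by (simp add: walk_in_def)

lemma walk_mono: "walk_in X L p \<Longrightarrow> X \<subseteq> Y \<Longrightarrow> walk_in Y L p"
  by (auto simp: walk_in_def)

lemma walk_tl: "walk_in X L p \<Longrightarrow> tl p \<noteq> [] \<Longrightarrow> walk_in X L (tl p)"
  by (cases p rule: remdups_adj.cases) auto

lemma walk_suffix: "walk_in X L (a @ b) \<Longrightarrow> b \<noteq> [] \<Longrightarrow> walk_in X L b"
  by (cases "a = []") (auto simp: walk_append)

lemma walk_prefix: "walk_in X L (a @ b) \<Longrightarrow> a \<noteq> [] \<Longrightarrow> walk_in X L a"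
  by (cases "b = []") (auto simp: walk_append)

lemma conn_refl: "x \<in> X \<Longrightarrow> connected_in X L x x"
  unfolding connected_in_def by (rule exI[of _ "[x]"]) simp

lemma conn_sym: "connected_in X L u v \<Longrightarrow> connected_in X L v u"
  unfolding connected_in_def
  by (metis hd_rev last_rev walk_rev)

lemma conn_trans: "connected_in X L u v \<Longrightarrow> connected_in X L v w \<Longrightarrow> connected_in X L u w"
proof -
  assume "connected_in X L u v" "connected_in X L v w"
  then obtain p q where p: "walk_in X L p" "hd p = u" "last p = v"
    and q: "walk_in X L q" "hd q = v" "last q = w" by (auto simp: connected_in_def)
  show ?thesis
  proof (cases "tl q = []")
    case True
    then have "q = [v]" using q by (cases q) auto
    then show ?thesis using p q by (auto simp: connected_in_def)
  next
    case False
    have qq: "q = hd q # tl q" using q by (cases q) auto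
    have "walk_in X L (p @ tl q)"
      using p q False walk_tl[OF q(1) False] qq walk_Cons_Cons
      by (subst walk_append) (auto, metis list.exhaust_sel walk_Cons_Cons)
    moreover have "last (p @ tl q) = w" using False q qq by (metis last_ConsR last_appendR)
    moreover have "hd (p @ tl q) = u" using p by (cases p) auto
    ultimately show ?thesis by (auto simp: connected_in_def)
  qed
qed

lemma conn_edge: "x \<in> X \<Longrightarrow> y \<in> X \<Longrightarrow> {x,y} \<in> L \<Longrightarrow> connected_in X L x y"
  unfolding connected_in_def by (rule exI[of _ "[x,y]"]) simp

lemma conn_mono: "connected_in X L u v \<Longrightarrow> X \<subseteq> Y \<Longrightarrow> connected_in Y L u v"
  unfolding connected_in_def using walk_mono by blast

lemma conn_in: "connected_in X L u v \<Longrightarrow> u \<in> X \<and> v \<in> X"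
  unfolding connected_in_def by (auto simp: walk_in_def)


lemma walk_Cons: "walk_in X L (x # p) \<longleftrightarrow> x \<in> X \<and> (p = [] \<or> ({x, hd p} \<in> L \<and> walk_in X L p))"
  by (cases p) auto

lemma shorten: "walk_in X L p \<Longrightarrow> \<exists>q. walk_in X L q \<and> distinct q \<and> hd q = hd p \<and> last q = last p \<and> set q \<subseteq> set p"
proof (induction p)
  case Nil then show ?case by simp
next
  case (Cons x p)
  show ?case
  proof (cases "p = []")
    case True then show ?thesis using Cons by (intro exI[of _ "[x]"]) auto
  next
    case False
    then have wp: "walk_in X L p" and x: "x \<in> X" "{x, hd p} \<in> L" using Cons.prems by (auto simp: walk_Cons)
    obtain q where q: "walk_in X L q" "distinct q" "hd q = hd p" "last q = last p" "set q \<subseteq> set p"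
      using Cons.IH[OF wp] by blast
    have qne: "q \<noteq> []" using q(1) by auto
    show ?thesis
    proof (cases "x \<in> set q")
      case False
      then show ?thesis using q x qne False \<open>p \<noteq> []\<close> by (intro exI[of _ "x # q"]) (auto simp: walk_Cons)
    next
      case True
      then obtain a b where ab: "q = a @ x # b" by (metis split_list)
      have "walk_in X L (x # b)" using walk_suffix q(1) ab by blast
      moreover have "distinct (x # b)" using q(2) ab by simp
      moreover have "last (x # b) = last (x # p)" using q(4) ab \<open>p \<noteq> []\<close> by simp
      moreover have "set (x # b) \<subseteq> set (x # p)" using q(5) ab by auto
      ultimately show ?thesis by (intro exI[of _ "x # b"]) simp
    qed
  qed
qed

lemma first_hit: "walk_in X L R \<Longrightarrow> distinct R \<Longrightarrow> last R \<in> T \<Longrightarrow>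
  \<exists>R'. walk_in X L R' \<and> distinct R' \<and> hd R' = hd R \<and> last R' \<in> T \<and> set R' \<subseteq> set R \<and> set (butlast R') \<inter> T = {}"
proof (induction R)
  case Nil then show ?case by simp
next
  case (Cons x R)
  show ?case
  proof (cases "x \<in> T")
    case True then show ?thesis using Cons.prems by (intro exI[of _ "[x]"]) (auto simp: walk_Cons)
  next
    case False
    then have ne: "R \<noteq> []" using Cons.prems by auto
    then have wR: "walk_in X L R" and x: "x \<in> X" "{x, hd R} \<in> L" using Cons.prems by (auto simp: walk_Cons)
    obtain R' where R': "walk_in X L R'" "distinct R'" "hd R' = hd R" "last R' \<in> T" "set R' \<subseteq> set R"
      "set (butlast R') \<inter> T = {}"
      using Cons.IH[OF wR] Cons.prems ne by auto
    have "R' \<noteq> []" using R'(1) by auto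
    then show ?thesis using R' x False Cons.prems
      by (intro exI[of _ "x # R'"]) (auto simp: walk_Cons)
  qed
qed


lemma walk_restrict: "walk_in X L p \<Longrightarrow> set p \<subseteq> Y \<Longrightarrow> walk_in Y L p"
  by (auto simp: walk_in_def)

lemma set_butlast_last: "R \<noteq> [] \<Longrightarrow> set R = set (butlast R) \<union> {last R}"
  by (metis append_butlast_last_id insert_is_Un list.set(2) set_append sup_commute empty_set)

lemma combine:
  assumes w: "walk_in X L (p1 @ w # c @ y # d)" and dp: "distinct (p1 @ w # c @ y # d)"
    and p1: "p1 \<noteq> []" and R: "walk_in X L R" "hd R = u" "last R = y" "distinct R"
    and RI: "set R \<inter> set (p1 @ w # c @ y # d) = {y}" and e: "{w,u} \<in> L"
  shows "\<exists>p'. walk_in X L p' \<and> distinct p' \<and> hd p' = hd p1 \<and> last p' = last (p1 @ w # c @ y # d) \<and> u \<in> set p'"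
proof -
  have Rne: "R \<noteq> []" using R by auto
  have w1: "walk_in X L (p1 @ [w])" using walk_prefix[of X L "p1 @ [w]" "c @ y # d"] w by simp
  have w2: "walk_in X L ((p1 @ [w]) @ R)" using w1 R Rne e by (subst walk_append) auto
  have w3: "walk_in X L ((p1 @ [w] @ R) @ d)"
  proof (cases "d = []")
    case True then show ?thesis using w2 by simp
  next
    case False
    have "walk_in X L (y # d)" using walk_suffix[of X L "p1 @ w # c" "y # d"] w by simp
    then show ?thesis using w2 False R Rne by (subst walk_append) (auto simp: walk_Cons)
  qed
  have yR: "y \<in> set R" using R Rne by auto
  have "distinct ((p1 @ [w] @ R) @ d)" using dp RI yR R(4) by auto
  moreover have "last ((p1 @ [w] @ R) @ d) = last (p1 @ w # c @ y # d)"
    using R Rne by (cases "d = []") auto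
  moreover have "hd ((p1 @ [w] @ R) @ d) = hd p1" using p1 by simp
  moreover have "u \<in> set ((p1 @ [w] @ R) @ d)" using R Rne hd_in_set by fastforce
  ultimately show ?thesis using w3 by blast
qed

lemma walk_join: "walk_in X L (xs @ [w]) \<Longrightarrow> walk_in X L (w # ys) \<Longrightarrow> walk_in X L (xs @ w # ys)"
proof (cases "xs = []")
  case False
  assume a: "walk_in X L (xs @ [w])" "walk_in X L (w # ys)"
  then have "walk_in X L xs" "{last xs, w} \<in> L" using walk_append[of xs "[w]" X L] False by auto
  then show ?thesis using a False walk_append[of xs "w # ys" X L] by simp
qed simp

definition good :: "'a set \<Rightarrow> 'a set set \<Rightarrow> 'a set \<Rightarrow> 'a \<Rightarrow> bool" where
  "good X L M u \<longleftrightarrow> u \<in> X \<and> (\<forall>x. \<exists>m\<in>M. connected_in (X - ({x} - {u})) L u m)"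

lemma good_D: "good X L M u \<Longrightarrow> x \<noteq> u \<Longrightarrow> \<exists>m\<in>M. connected_in (X - {x}) L u m"
proof -
  assume g: "good X L M u" and xu: "x \<noteq> u"
  have eq: "{x} - {u} = {x}" using xu by auto
  from g have "\<exists>m\<in>M. connected_in (X - ({x} - {u})) L u m" unfolding good_def by blast
  then show ?thesis by (simp only: eq)
qed

lemma cycle:
  "\<forall>u q. good X L M u \<longrightarrow> u \<notin> M \<longrightarrow> walk_in X L q \<longrightarrow> distinct q \<longrightarrow> hd q = u \<longrightarrow> last q \<in> M
     \<longrightarrow> length q = n \<longrightarrow>
     (\<exists>p. walk_in X L p \<and> distinct p \<and> hd p \<in> M \<and> last p \<in> M \<and> hd p \<noteq> last p \<and> u \<in> set p)"
proof (induction n rule: less_induct)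
  case (less n)
  show ?case
  proof (intro allI impI)
    fix u q
    assume gu: "good X L M u" and uM: "u \<notin> M" and wq: "walk_in X L q" and dq: "distinct q"
      and hq: "hd q = u" and lq: "last q \<in> M" and len: "length q = n"
    obtain w1 rest where q: "q = u # w1 # rest"
    proof (cases q)
      case Nil then show ?thesis using wq by simp
    next
      case (Cons a t)
      then show ?thesis
      proof (cases t)
        case Nil then show ?thesis using Cons hq lq uM by simp
      next
        case (Cons b r) then show ?thesis using \<open>q = a # t\<close> hq that by simp
      qed
    qed
    have e: "{w1, u} \<in> L" using wq q by (simp add: insert_commute)
    have uX: "u \<in> X" and w1X: "w1 \<in> X" using wq q walk_set[of X L "w1 # rest"] by auto
    have uw: "u \<noteq> w1" using dq q by auto
    show "\<exists>p. walk_in X L p \<and> distinct p \<and> hd p \<in> M \<and> last p \<in> M \<and> hd p \<noteq> last p \<and> u \<in> set p"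
    proof (cases "w1 \<in> M")
      case True
      obtain m where m: "m \<in> M" "connected_in (X - {w1}) L u m"
        using good_D[OF gu uw[symmetric]] by blast
      obtain R0 where R0: "walk_in (X - {w1}) L R0" "hd R0 = u" "last R0 = m"
        using m(2) by (auto simp: connected_in_def)
      obtain R where R: "walk_in (X - {w1}) L R" "distinct R" "hd R = u" "last R = m"
        using shorten[OF R0(1)] R0 by auto
      have Rne: "R \<noteq> []" using R by auto
      have sR: "set R \<subseteq> X - {w1}" using walk_set[OF R(1)] .
      have "walk_in X L (w1 # R)" using R Rne e w1X walk_mono[OF R(1)] by (auto simp: walk_Cons)
      moreover have "distinct (w1 # R)" using R sR by auto
      moreover have "m \<noteq> w1" using sR R Rne last_in_set by fastforce
      moreover have "u \<in> set (w1 # R)" using R Rne hd_in_set by fastforce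
      ultimately show ?thesis using True R Rne m by (intro exI[of _ "w1 # R"]) auto
    next
      case False
      have gw: "good X L M w1" unfolding good_def
      proof (intro conjI allI)
        show "w1 \<in> X" by fact
        fix x
        show "\<exists>m\<in>M. connected_in (X - ({x} - {w1})) L w1 m"
        proof (cases "x \<in> set rest \<and> x \<noteq> w1")
          case False
          have "walk_in (X - ({x} - {w1})) L (w1 # rest)"
          proof (rule walk_restrict)
            show "walk_in X L (w1 # rest)" using wq q by simp
            have "set q \<subseteq> X" using walk_set[OF wq] .
            then show "set (w1 # rest) \<subseteq> X - ({x} - {w1})" using q False by auto
          qed
          then have "connected_in (X - ({x} - {w1})) L w1 (last q)"
            unfolding connected_in_def using q by (intro exI[of _ "w1 # rest"]) auto
          then show ?thesis using lq by blast
        next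
          case True
          then have xu: "x \<noteq> u" using dq q by auto
          obtain m where m: "m \<in> M" "connected_in (X - {x}) L u m"
            using good_D[OF gu xu] by blast
          have "connected_in (X - {x}) L w1 u" using True xu uX w1X e by (intro conn_edge) auto
          then have c: "connected_in (X - {x}) L w1 m" by (rule conn_trans) (rule m(2))
          have "X - ({x} - {w1}) = X - {x}" using True by auto
          then show ?thesis using m(1) c by auto
        qed
      qed
      have a1: "walk_in X L (w1 # rest)" using wq q by simp
      have a2: "distinct (w1 # rest)" using dq q by simp
      have a3: "length (w1 # rest) < n" using len q by simp
      have a4: "hd (w1 # rest) = w1" "last (w1 # rest) \<in> M" using lq q by auto
      have "\<exists>p. walk_in X L p \<and> distinct p \<and> hd p \<in> M \<and> last p \<in> M \<and> hd p \<noteq> last p \<and> w1 \<in> set p"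
        using less.IH[OF a3, rule_format, OF gw False a1 a2 a4 refl] .
      then obtain p where p: "walk_in X L p" "distinct p" "hd p \<in> M" "last p \<in> M" "hd p \<noteq> last p" "w1 \<in> set p"
        by blast
      show ?thesis
      proof (cases "u \<in> set p")
        case True then show ?thesis using p by blast
      next
        case uP: False
        obtain m where m: "m \<in> M" "connected_in (X - {w1}) L u m"
          using good_D[OF gu uw[symmetric]] by blast
        obtain R0 where R0: "walk_in (X - {w1}) L R0" "hd R0 = u" "last R0 = m"
          using m(2) by (auto simp: connected_in_def)
        obtain R1 where R1: "walk_in (X - {w1}) L R1" "distinct R1" "hd R1 = u" "last R1 = m"
          using shorten[OF R0(1)] R0 by auto
        obtain R where R: "walk_in (X - {w1}) L R" "distinct R" "hd R = u" "last R \<in> set p \<union> M"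
          "set (butlast R) \<inter> (set p \<union> M) = {}"
          using first_hit[OF R1(1) R1(2), of "set p \<union> M"] R1 m by auto
        have Rne: "R \<noteq> []" using R by auto
        have sR: "set R \<subseteq> X - {w1}" using walk_set[OF R(1)] .
        have wRX: "walk_in X L R" using walk_mono[OF R(1)] by blast
        define y where "y = last R"
        obtain p1 p2 where pp: "p = p1 @ w1 # p2" using p(6) by (metis split_list)
        have p1ne: "p1 \<noteq> []" using pp p(3) False by (cases p1) auto
        have p2ne: "p2 \<noteq> []" using pp p(4) False by (cases p2) auto
        have sRu: "set R = set (butlast R) \<union> {y}" using set_butlast_last[OF Rne] y_def by simp
        show ?thesis
        proof (cases "y \<in> set p")
          case False
          then have yM: "y \<in> M" using R y_def by auto
          have "last (rev R) = u" using R(3) Rne by (simp add: last_rev)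
          then have "walk_in X L (rev R @ [w1])" using wRX Rne e w1X walk_append[of "rev R" "[w1]" X L]
            by (simp add: walk_rev insert_commute)
          moreover have "walk_in X L (w1 # rev p1)"
          proof -
            have "walk_in X L (p1 @ [w1])" using walk_prefix[of X L "p1 @ [w1]" p2] p(1) pp by simp
            then show ?thesis using walk_rev[of X L "p1 @ [w1]"] by simp
          qed
          ultimately have f1: "walk_in X L (rev R @ w1 # rev p1)"
            by (rule walk_join)
          have f2: "distinct (rev R @ w1 # rev p1)"
            using R(2) p(2) pp sR sRu False R(5) by auto
          have f3: "hd (rev R @ w1 # rev p1) = y" using Rne y_def by (simp add: hd_rev)
          have f4: "last (rev R @ w1 # rev p1) = hd p" using p1ne pp by (simp add: last_rev)
          have f5: "u \<in> set (rev R @ w1 # rev p1)" using R Rne hd_in_set by fastforce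
          have f6: "y \<noteq> hd p" using False p1ne pp by auto
          show ?thesis
          proof (intro exI[of _ "rev R @ w1 # rev p1"] conjI)
            show "hd (rev R @ w1 # rev p1) \<in> M" using f3 yM by simp
            show "last (rev R @ w1 # rev p1) \<in> M" using f4 p(3) by simp
            show "hd (rev R @ w1 # rev p1) \<noteq> last (rev R @ w1 # rev p1)" using f3 f4 f6 by simp
          qed (fact f1 f2 f5)+
        next
          case True
          have RI: "set R \<inter> set p = {y}" using sRu R(5) True by auto
          show ?thesis
          proof (cases "y \<in> set p2")
            case True
            then obtain c d where cd: "p2 = c @ y # d" by (metis split_list)
            have pe: "p = p1 @ w1 # c @ y # d" using pp cd by simp
            obtain p' where pp': "walk_in X L p'" "distinct p'" "hd p' = hd p1" "last p' = last (p1 @ w1 # c @ y # d)" "u \<in> set p'"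
              using combine[OF p(1)[unfolded pe] p(2)[unfolded pe] p1ne wRX R(3) y_def[symmetric] R(2) RI[unfolded pe] e]
              by blast
            have h1: "hd p1 = hd p" using pp p1ne by simp
            have h2: "last (p1 @ w1 # c @ y # d) = last p" using pe by simp
            show ?thesis
            proof (intro exI[of _ p'] conjI)
              show "hd p' \<in> M" using pp'(3) h1 p(3) by simp
              show "last p' \<in> M" using pp'(4) h2 p(4) by simp
              show "hd p' \<noteq> last p'" using pp'(3,4) h1 h2 p(5) by simp
            qed (fact pp')+
          next
            case False
            have "y \<in> set R" using Rne y_def by simp
            then have "y \<in> set p1" using True False pp sR by auto
            then obtain c d where cd: "rev p1 = c @ y # d" by (metis split_list set_rev)
            have rp: "rev p = rev p2 @ w1 # c @ y # d" using pp cd by simp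
            have wr: "walk_in X L (rev p)" using p(1) walk_rev by blast
            have dr: "distinct (rev p)" using p(2) by simp
            have RIr: "set R \<inter> set (rev p) = {y}" using RI by simp
            have r2: "rev p2 \<noteq> []" using p2ne by simp
            obtain p' where pp': "walk_in X L p'" "distinct p'" "hd p' = hd (rev p2)" "last p' = last (rev p2 @ w1 # c @ y # d)" "u \<in> set p'"
              using combine[OF wr[unfolded rp] dr[unfolded rp] r2 wRX R(3) y_def[symmetric] R(2) RIr[unfolded rp] e]
              by blast
            have h1: "hd (rev p2) = last p" using pp p2ne by (simp add: hd_rev)
            have h2: "last (rev p2 @ w1 # c @ y # d) = hd p" using rp by (metis last_rev)
            show ?thesis
            proof (intro exI[of _ p'] conjI)
              show "hd p' \<in> M" using pp'(3) h1 p(4) by simp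
              show "last p' \<in> M" using pp'(4) h2 p(3) by simp
              show "hd p' \<noteq> last p'" using pp'(3,4) h1 h2 p(5) by simp
            qed (fact pp')+
          qed
        qed
      qed
    qed
  qed
qed


lemma part_a:
  assumes ug: "undirected_graph V L" and MV: "M \<subseteq> V" and SV: "S \<subseteq> V - M"
    and cc: "cut_condition V L M S (k + 1)"
    and F2: "F2 \<subseteq> V - M" "card F2 \<le> k" and s: "s \<in> S" "s \<in> F1" "s \<notin> F2"
  shows "failed_paths (csp_paths V L M) F1 \<noteq> failed_paths (csp_paths V L M) F2"
proof -
  define X where "X = V - F2"
  have finV: "finite V" using ug by (simp add: undirected_graph_def)
  have sX: "s \<in> X" using s SV X_def by auto
  have sM: "s \<notin> M" using s SV by auto
  have gs: "good X L M s" unfolding good_def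
  proof (intro conjI allI)
    show "s \<in> X" by fact
    fix x
    define V' where "V' = (F2 \<union> ({x} - {s})) \<inter> V"
    have V'V: "V' \<subseteq> V" using V'_def by auto
    have finF2: "finite F2" using F2 finV finite_subset by blast
    have "card V' \<le> card (F2 \<union> ({x} - {s}))"
      using finF2 by (intro card_mono) (auto simp: V'_def)
    also have "\<dots> \<le> card F2 + card ({x} - {s})" by (rule card_Un_le)
    also have "card ({x} - {s}) \<le> 1" by (cases "x = s") auto
    finally have cV': "card V' \<le> k + 1" using F2 by linarith
    have "V' \<inter> M \<subseteq> {x}" using F2 V'_def by auto
    then have cM: "card (V' \<inter> M) \<le> 1" using card_mono[of "{x}" "V' \<inter> M"] by auto
    have eq: "V - V' = X - ({x} - {s})" unfolding V'_def X_def by auto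
    have sV': "s \<in> V - V'" using eq sX by auto
    define C where "C = {v. connected_in (V - V') L s v}"
    have "C \<in> components (V - V') L" unfolding components_def C_def using sV' by blast
    moreover have "s \<in> C" unfolding C_def using conn_refl[OF sV', of L] by simp
    then have "C \<inter> S \<noteq> {}" using s by blast
    ultimately have "C \<inter> M \<noteq> {}" using cc[unfolded cut_condition_def, rule_format, OF V'V cV' cM] by blast
    then show "\<exists>m\<in>M. connected_in (X - ({x} - {s})) L s m" using eq C_def by auto
  qed
  obtain m where m: "m \<in> M" "connected_in (X - ({s} - {s})) L s m" using gs unfolding good_def by blast
  then obtain q0 where q0: "walk_in X L q0" "hd q0 = s" "last q0 = m" by (auto simp: connected_in_def)
  obtain q where q: "walk_in X L q" "distinct q" "hd q = s" "last q = m"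
    using shorten[OF q0(1)] q0 by auto
  obtain p where p: "walk_in X L p" "distinct p" "hd p \<in> M" "last p \<in> M" "hd p \<noteq> last p" "s \<in> set p"
    using cycle[of X L M "length q", rule_format, OF gs sM q(1) q(2) q(3)] q(4) m(1) by blast
  have "p \<in> csp_paths V L M" using p walk_mono[OF p(1), of V] X_def by (auto simp: csp_paths_def)
  moreover have "set p \<inter> F2 = {}" using walk_set[OF p(1)] X_def by auto
  ultimately have "p \<in> failed_paths (csp_paths V L M) F1" "p \<notin> failed_paths (csp_paths V L M) F2"
    using p s by (auto simp: failed_paths_def)
  then show ?thesis by blast
qed

lemma part_a_full:
  assumes ug: "undirected_graph V L" and MV: "M \<subseteq> V" and SV: "S \<subseteq> V - M"
    and cc: "cut_condition V L M S (k + 1)"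
  shows "k_identifiable V L M S k"
  unfolding k_identifiable_def
proof (intro allI impI)
  fix F1 F2 assume F: "F1 \<subseteq> V - M" "F2 \<subseteq> V - M" "card F1 \<le> k" "card F2 \<le> k" "F1 \<inter> S \<noteq> F2 \<inter> S"
  then obtain s where s: "s \<in> S" "(s \<in> F1 \<and> s \<notin> F2) \<or> (s \<in> F2 \<and> s \<notin> F1)" by blast
  show "failed_paths (csp_paths V L M) F1 \<noteq> failed_paths (csp_paths V L M) F2"
  proof (cases "s \<in> F1 \<and> s \<notin> F2")
    case True then show ?thesis using part_a[OF ug MV SV cc F(2) F(4), of s F1] s(1) by blast
  next
    case False
    then have "s \<in> F2" "s \<notin> F1" using s by auto
    then have "failed_paths (csp_paths V L M) F2 \<noteq> failed_paths (csp_paths V L M) F1"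
      using part_a[OF ug MV SV cc F(1) F(3), of s F2] s(1) by blast
    then show ?thesis by simp
  qed
qed


lemma cross_fwd:
  assumes w: "walk_in V L p"
    and clA: "\<forall>x y. x \<in> C \<longrightarrow> y \<in> V \<longrightarrow> y \<notin> V' \<longrightarrow> {x,y} \<in> L \<longrightarrow> y \<in> C"
  shows "i < j \<Longrightarrow> j < length p \<Longrightarrow> p ! i \<in> C \<Longrightarrow> p ! j \<notin> C \<Longrightarrow> \<exists>t. i < t \<and> t \<le> j \<and> p ! t \<in> V'"
proof (induction j)
  case 0 then show ?case by simp
next
  case (Suc j)
  show ?case
  proof (cases "p ! j \<in> C")
    case True
    have e: "{p ! j, p ! Suc j} \<in> L" using w Suc.prems unfolding walk_in_def by blast
    have "p ! Suc j \<in> V" using w Suc.prems nth_mem walk_set by blast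
    then have "p ! Suc j \<in> V'" using clA[rule_format, OF True _ _ e] Suc.prems by blast
    then show ?thesis using Suc.prems by blast
  next
    case False
    then have "i < j" using Suc.prems by (metis less_Suc_eq)
    then obtain t where "i < t" "t \<le> j" "p ! t \<in> V'" using Suc.IH Suc.prems False by auto
    then show ?thesis by (intro exI[of _ t]) auto
  qed
qed

lemma cross_bwd:
  assumes w: "walk_in V L p"
    and clA: "\<forall>x y. x \<in> C \<longrightarrow> y \<in> V \<longrightarrow> y \<notin> V' \<longrightarrow> {x,y} \<in> L \<longrightarrow> y \<in> C"
  shows "j < i \<Longrightarrow> i < length p \<Longrightarrow> p ! i \<in> C \<Longrightarrow> p ! j \<notin> C \<Longrightarrow> \<exists>t. j \<le> t \<and> t < i \<and> p ! t \<in> V'"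
proof (induction i)
  case 0 then show ?case by simp
next
  case (Suc i)
  show ?case
  proof (cases "p ! i \<in> C")
    case True
    then have "j < i" using Suc.prems by (metis less_Suc_eq)
    then obtain t where "j \<le> t" "t < i" "p ! t \<in> V'" using Suc.IH Suc.prems True by auto
    then show ?thesis by (intro exI[of _ t]) auto
  next
    case False
    have e: "{p ! i, p ! Suc i} \<in> L" using w Suc.prems unfolding walk_in_def by blast
    then have e': "{p ! Suc i, p ! i} \<in> L" by (simp add: insert_commute)
    have "p ! i \<in> V" using w Suc.prems nth_mem walk_set by (metis Suc_lessD subsetD)
    then have "p ! i \<in> V'" using clA[rule_format, OF Suc.prems(3) _ _ e'] False by blast
    then show ?thesis using Suc.prems by (intro exI[of _ i]) auto
  qed
qed

lemma part_b:
  assumes ug: "undirected_graph V L" and MV: "M \<subseteq> V" and SV: "S \<subseteq> V - M" and k: "k \<ge> 1"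
    and ki: "k_identifiable V L M S k"
  shows "cut_condition V L M S k"
  unfolding cut_condition_def
proof (intro allI impI ballI)
  fix V' C
  assume V'V: "V' \<subseteq> V" and cV': "card V' \<le> k" and cM: "card (V' \<inter> M) \<le> 1"
    and Cc: "C \<in> components (V - V') L" and CS: "C \<inter> S \<noteq> {}"
  show "C \<inter> M \<noteq> {}"
  proof
    assume CM: "C \<inter> M = {}"
    have finV: "finite V" using ug by (simp add: undirected_graph_def)
    have finV': "finite V'" using V'V finV finite_subset by blast
    obtain u0 where u0: "u0 \<in> V - V'" "C = {v. connected_in (V - V') L u0 v}"
      using Cc unfolding components_def by blast
    have CV: "C \<subseteq> V - V'"
    proof
      fix v assume "v \<in> C"
      then have "connected_in (V - V') L u0 v" using u0(2) by simp
      from conn_in[OF this] show "v \<in> V - V'" by simp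
    qed
    have cl: "\<And>x y. x \<in> C \<Longrightarrow> y \<in> V \<Longrightarrow> y \<notin> V' \<Longrightarrow> {x,y} \<in> L \<Longrightarrow> y \<in> C"
    proof -
      fix x y assume "x \<in> C" "y \<in> V" "y \<notin> V'" "{x,y} \<in> L"
      then have "connected_in (V - V') L u0 x" "connected_in (V - V') L x y"
        using u0 CV by (auto intro!: conn_edge)
      then have "connected_in (V - V') L u0 y" by (rule conn_trans)
      then show "y \<in> C" using u0 by simp
    qed
    have clA: "\<forall>x y. x \<in> C \<longrightarrow> y \<in> V \<longrightarrow> y \<notin> V' \<longrightarrow> {x,y} \<in> L \<longrightarrow> y \<in> C"
      using cl by blast
    obtain s where s: "s \<in> C" "s \<in> S" using CS by blast
    have sV': "s \<notin> V'" using s CV by auto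
    define v where "v = (if V' \<inter> M \<noteq> {} then (SOME m. m \<in> V' \<inter> M) else (SOME w. w \<in> V'))"
    have vsub: "V' \<inter> (M \<union> {v}) \<subseteq> {v}"
    proof (cases "V' \<inter> M \<noteq> {}")
      case True
      then obtain m0 where "m0 \<in> V' \<inter> M" by blast
      then have sm: "(SOME m. m \<in> V' \<inter> M) \<in> V' \<inter> M" by (rule someI)
      have "v = (SOME m. m \<in> V' \<inter> M)" unfolding v_def by (rule if_P[OF True])
      then have vin: "v \<in> V' \<inter> M" using sm by (simp only:)
      have "finite (V' \<inter> M)" using finV' by simp
      then have "\<forall>a\<in>V' \<inter> M. \<forall>b\<in>V' \<inter> M. a = b" using cM card_le_Suc0_iff_eq by auto
      then show ?thesis using vin by auto
    next
      case False then show ?thesis by auto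
    qed
    have vV': "v \<in> V'" if ne: "V' \<noteq> {}"
    proof (cases "V' \<inter> M \<noteq> {}")
      case True
      then obtain m0 where "m0 \<in> V' \<inter> M" by blast
      then have sm: "(SOME m. m \<in> V' \<inter> M) \<in> V' \<inter> M" by (rule someI)
      have "v = (SOME m. m \<in> V' \<inter> M)" unfolding v_def by (rule if_P[OF True])
      then show ?thesis using sm by (simp only: Int_iff)
    next
      case False
      from ne obtain w0 where "w0 \<in> V'" by blast
      then have sm: "(SOME w. w \<in> V') \<in> V'" by (rule someI)
      have "v = (SOME w. w \<in> V')" unfolding v_def by (rule if_not_P[OF False])
      then show ?thesis using sm by (simp only:)
    qed
    define F1 where "F1 = V' - M - {v}"
    define F2 where "F2 = insert s F1"
    have key: "\<And>p. p \<in> csp_paths V L M \<Longrightarrow> s \<in> set p \<Longrightarrow> set p \<inter> F1 \<noteq> {}"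
    proof -
      fix p assume pP: "p \<in> csp_paths V L M" and sp: "s \<in> set p"
      have w: "walk_in V L p" and dp: "distinct p" and hp: "hd p \<in> M" and lp: "last p \<in> M"
        using pP by (auto simp: csp_paths_def)
      have pne: "p \<noteq> []" using w by auto
      obtain i where i: "i < length p" "p ! i = s" using sp by (metis in_set_conv_nth)
      have h0: "p ! 0 \<notin> C" using hp CM pne by (metis disjoint_iff hd_conv_nth)
      have hl: "p ! (length p - 1) \<notin> C" using lp CM pne by (metis disjoint_iff last_conv_nth)
      have "i \<noteq> 0"
      proof
        assume "i = 0" then show False using h0 i(2) s(1) by simp
      qed
      then have i0: "0 < i" by simp
      have "i \<noteq> length p - 1"
      proof
        assume "i = length p - 1" then show False using hl i(2) s(1) by simp
      qed
      then have il: "i < length p - 1" using i(1) by linarith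
      obtain t1 where t1: "t1 < i" "p ! t1 \<in> V'"
        using cross_bwd[where V=V and L=L and p=p and C=C and V'=V' and j=0 and i=i, OF w clA] i0 i s h0 by auto
      obtain t2 where t2: "i < t2" "t2 \<le> length p - 1" "p ! t2 \<in> V'"
        using cross_fwd[where V=V and L=L and p=p and C=C and V'=V' and i=i and j="length p - 1", OF w clA] il i s hl pne by auto
      have t2l: "t2 < length p" using t2 i by linarith
      have ne: "p ! t1 \<noteq> p ! t2" using dp t1 t2 t2l i by (simp add: nth_eq_iff_index_eq)
      show "set p \<inter> F1 \<noteq> {}"
      proof (cases "p ! t1 = v")
        case True
        then have "p ! t2 \<noteq> v" using ne by simp
        then have "p ! t2 \<in> F1" using vsub t2 unfolding F1_def by auto
        then show ?thesis using t2l nth_mem by blast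
      next
        case False
        then have "p ! t1 \<in> F1" using vsub t1 unfolding F1_def by auto
        then show ?thesis using t1 i nth_mem by (metis disjoint_iff less_trans)
      qed
    qed
    have eqF: "failed_paths (csp_paths V L M) F1 = failed_paths (csp_paths V L M) F2"
      unfolding failed_paths_def F2_def using key by auto
    have F1V: "F1 \<subseteq> V - M" using V'V unfolding F1_def by auto
    have F2V: "F2 \<subseteq> V - M" using F1V s SV unfolding F2_def by auto
    have finF1: "finite F1" using finV' unfolding F1_def by simp
    have cF1: "card F1 + 1 \<le> k"
    proof (cases "V' = {}")
      case True then show ?thesis using k unfolding F1_def by simp
    next
      case False
      then have "v \<in> V'" using vV' by blast
      then have "card (V' - {v}) = card V' - 1" using finV' by simp
      moreover have "card F1 \<le> card (V' - {v})" using finV' unfolding F1_def by (intro card_mono) auto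
      moreover have "card V' \<ge> 1" using False finV' by (simp add: Suc_leI card_gt_0_iff)
      ultimately show ?thesis using cV' by linarith
    qed
    have cF2: "card F2 \<le> k" unfolding F2_def using cF1 finF1 card_insert_le_m1
      by (metis add.commute card_insert_if plus_1_eq_Suc Suc_leD le_SucI)
    have "F1 \<inter> S \<noteq> F2 \<inter> S" using s sV' unfolding F1_def F2_def by auto
    then have "failed_paths (csp_paths V L M) F1 \<noteq> failed_paths (csp_paths V L M) F2"
      using ki[unfolded k_identifiable_def, rule_format, OF F1V F2V] cF1 cF2 by linarith
    then show False using eqF by contradiction
  qed
qed


theorem lemma5:
  fixes V :: "'a set" and L :: "'a set set" and M S :: "'a set" and k :: nat
  assumes "undirected_graph V L" and "connected_graph V L"
    and "M \<subseteq> V" and "S \<subseteq> V - M" and "k \<ge> 1"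
  shows "(cut_condition V L M S (k + 1) \<longrightarrow> k_identifiable V L M S k)
       \<and> (k_identifiable V L M S k \<longrightarrow> cut_condition V L M S k)"
proof (intro conjI impI)
  assume "cut_condition V L M S (k + 1)"
  then show "k_identifiable V L M S k" using part_a_full[OF assms(1) assms(3) assms(4)] by blast
next
  assume "k_identifiable V L M S k"
  then show "cut_condition V L M S k" using part_b[OF assms(1) assms(3) assms(4) assms(5)] by blast
qed

end
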